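(* If $G$ and $H$ are connected graphs, then $\mathrm{gp}(G\boxtimes H)\ge \mathrm{gp}(G)\,\mathrm{gp}(H)$.
   Context: All graphs are finite and simple. The strong product $G\boxtimes H$ has vertex set $V(G)\times V(H)$, with distinct $(g,h),(g',h')$ adjacent iff ($g=g'$ or $gg'\in E(G)$) and ($h=h'$ or $hh'\in E(H)$). For a connected graph $G$, a set $S\subseteq V(G)$ is a general position set if no three pairwise distinct vertices of $S$ lie on a common geodesic (shortest path); $\mathrm{gp}(G)$ is the maximum cardinality of a general position set. *)

theory Defs
  imports Main
begin

definition simple_graph :: "'a set \<Rightarrow> ('a \<Rightarrow> 'a \<Rightarrow> bool) \<Rightarrow> bool" where
  "simple_graph V E \<longleftrightarrow> finite V \<and> (\<forall>x y. E x y \<longrightarrow> x \<in> V \<and> y \<in> V)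
     \<and> (\<forall>x y. E x y \<longrightarrow> E y x) \<and> (\<forall>x. \<not> E x x)"

definition walk :: "'a set \<Rightarrow> ('a \<Rightarrow> 'a \<Rightarrow> bool) \<Rightarrow> 'a list \<Rightarrow> bool" where
  "walk V E xs \<longleftrightarrow> xs \<noteq> [] \<and> set xs \<subseteq> V \<and> (\<forall>i. Suc i < length xs \<longrightarrow> E (xs ! i) (xs ! Suc i))"

definition walk_betw :: "'a set \<Rightarrow> ('a \<Rightarrow> 'a \<Rightarrow> bool) \<Rightarrow> 'a \<Rightarrow> 'a list \<Rightarrow> 'a \<Rightarrow> bool" where
  "walk_betw V E u xs v \<longleftrightarrow> walk V E xs \<and> hd xs = u \<and> last xs = v"

definition connected_graph :: "'a set \<Rightarrow> ('a \<Rightarrow> 'a \<Rightarrow> bool) \<Rightarrow> bool" where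
  "connected_graph V E \<longleftrightarrow> V \<noteq> {} \<and> (\<forall>u\<in>V. \<forall>v\<in>V. \<exists>xs. walk_betw V E u xs v)"

definition dist :: "'a set \<Rightarrow> ('a \<Rightarrow> 'a \<Rightarrow> bool) \<Rightarrow> 'a \<Rightarrow> 'a \<Rightarrow> nat" where
  "dist V E u v = (LEAST n. \<exists>xs. walk_betw V E u xs v \<and> length xs = Suc n)"

definition geodesic :: "'a set \<Rightarrow> ('a \<Rightarrow> 'a \<Rightarrow> bool) \<Rightarrow> 'a \<Rightarrow> 'a list \<Rightarrow> 'a \<Rightarrow> bool" where
  "geodesic V E u xs v \<longleftrightarrow> walk_betw V E u xs v \<and> length xs = Suc (dist V E u v)"

definition gp_set :: "'a set \<Rightarrow> ('a \<Rightarrow> 'a \<Rightarrow> bool) \<Rightarrow> 'a set \<Rightarrow> bool" where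
  "gp_set V E S \<longleftrightarrow> S \<subseteq> V \<and>
     (\<forall>x\<in>S. \<forall>y\<in>S. \<forall>z\<in>S. x \<noteq> y \<and> y \<noteq> z \<and> x \<noteq> z \<longrightarrow>
        \<not> (\<exists>u v xs. geodesic V E u xs v \<and> x \<in> set xs \<and> y \<in> set xs \<and> z \<in> set xs))"

definition gp :: "'a set \<Rightarrow> ('a \<Rightarrow> 'a \<Rightarrow> bool) \<Rightarrow> nat" where
  "gp V E = Max (card ` {S. gp_set V E S})"

definition strong_prod_edge :: "('a \<Rightarrow> 'a \<Rightarrow> bool) \<Rightarrow> ('b \<Rightarrow> 'b \<Rightarrow> bool) \<Rightarrow> ('a \<times> 'b) \<Rightarrow> ('a \<times> 'b) \<Rightarrow> bool" where
  "strong_prod_edge EG EH p q \<longleftrightarrow> p \<noteq> q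
     \<and> (fst p = fst q \<or> EG (fst p) (fst q)) \<and> (snd p = snd q \<or> EH (snd p) (snd q))"

end

theory Submission
  imports Defs
begin

lemma walk_Cons2: "walk V E (x # y # ys) \<longleftrightarrow> x \<in> V \<and> E x y \<and> walk V E (y # ys)"
proof
  assume "walk V E (x # y # ys)"
  then show "x \<in> V \<and> E x y \<and> walk V E (y # ys)"
    unfolding walk_def by (auto dest: spec[of _ "Suc _"] spec[of _ 0])
next
  assume a: "x \<in> V \<and> E x y \<and> walk V E (y # ys)"
  show "walk V E (x # y # ys)"
    unfolding walk_def
  proof (intro conjI allI impI)
    show "set (x # y # ys) \<subseteq> V" using a by (auto simp: walk_def)
    fix i assume "Suc i < length (x # y # ys)"
    then show "E ((x # y # ys) ! i) ((x # y # ys) ! Suc i)"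
      using a by (cases i) (auto simp: walk_def)
  qed simp
qed

lemma walk_single: "walk V E [x] \<longleftrightarrow> x \<in> V"
  by (auto simp: walk_def)

lemma walk_append: "walk V E xs \<Longrightarrow> walk V E ys \<Longrightarrow> last xs = hd ys \<Longrightarrow> walk V E (xs @ tl ys)"
proof (induction xs)
  case Nil then show ?case by (simp add: walk_def)
next
  case (Cons a xs)
  show ?case
  proof (cases xs)
    case Nil
    then have "a # tl ys = ys" using Cons.prems
      by (metis last_ConsL list.collapse walk_def)
    then show ?thesis using Cons.prems Nil by simp
  next
    case (Cons b xs')
    then have "a \<in> V" "E a b" "walk V E xs" using Cons.prems walk_Cons2 by metis+
    then have "walk V E (xs @ tl ys)" using Cons.IH Cons.prems Cons by simp
    then show ?thesis using \<open>a \<in> V\<close> \<open>E a b\<close> Cons by (simp add: walk_Cons2)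
  qed
qed

lemma walk_betw_append:
  assumes "walk_betw V E u xs v" "walk_betw V E v ys w"
  shows "walk_betw V E u (xs @ tl ys) w \<and> length (xs @ tl ys) = length xs + length ys - 1"
proof -
  have ne: "xs \<noteq> []" "ys \<noteq> []" using assms by (auto simp: walk_betw_def walk_def)
  have "walk V E (xs @ tl ys)" using assms by (auto simp: walk_betw_def intro: walk_append)
  moreover have "hd (xs @ tl ys) = u" using assms ne by (auto simp: walk_betw_def)
  moreover have "last (xs @ tl ys) = w"
  proof (cases "tl ys = []")
    case True
    then have "ys = [hd ys]" using ne by (metis list.collapse)
    then show ?thesis using True assms by (auto simp: walk_betw_def)
  next
    case False
    then show ?thesis using assms ne by (auto simp: walk_betw_def) (metis last_tl)
  qed
  moreover have "length (xs @ tl ys) = length xs + length ys - 1" using ne by (cases ys) auto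
  ultimately show ?thesis by (simp add: walk_betw_def)
qed

lemma walk_subwalk:
  assumes "walk V E xs" "i \<le> k" "k < length xs"
  shows "walk_betw V E (xs ! i) (take (Suc (k - i)) (drop i xs)) (xs ! k)
     \<and> length (take (Suc (k - i)) (drop i xs)) = Suc (k - i)"
proof -
  let ?ys = "take (Suc (k - i)) (drop i xs)"
  have len: "length ?ys = Suc (k - i)" using assms by auto
  have "set ?ys \<subseteq> V" using assms(1) unfolding walk_def
    by (meson order_trans set_drop_subset set_take_subset)
  moreover have "\<forall>m. Suc m < length ?ys \<longrightarrow> E (?ys ! m) (?ys ! Suc m)"
    using assms len unfolding walk_def by auto
  moreover have "?ys \<noteq> []" using len by auto
  moreover have "hd ?ys = xs ! i" using assms len \<open>?ys \<noteq> []\<close>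
    by (simp add: hd_conv_nth)
  moreover have "last ?ys = xs ! k" using assms len
    by (simp add: last_conv_nth)
  ultimately show ?thesis using len by (auto simp: walk_betw_def walk_def)
qed

lemma dist_le: "walk_betw V E u xs v \<Longrightarrow> dist V E u v \<le> length xs - 1"
  unfolding dist_def
  by (rule Least_le) (auto simp: walk_betw_def walk_def)

lemma dist_ex: "\<exists>xs. walk_betw V E u xs v \<Longrightarrow> \<exists>xs. walk_betw V E u xs v \<and> length xs = Suc (dist V E u v)"
proof -
  assume "\<exists>xs. walk_betw V E u xs v"
  then obtain xs where "walk_betw V E u xs v" by blast
  then have "\<exists>n xs. walk_betw V E u xs v \<and> length xs = Suc n"
    by (auto simp: walk_betw_def walk_def) (metis Suc_pred length_greater_0_conv)
  then show ?thesis unfolding dist_def by (rule LeastI_ex)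
qed

lemma dist_tri:
  assumes "\<exists>xs. walk_betw V E u xs v" "\<exists>xs. walk_betw V E v xs w"
  shows "dist V E u w \<le> dist V E u v + dist V E v w"
proof -
  obtain xs where x: "walk_betw V E u xs v" "length xs = Suc (dist V E u v)"
    using dist_ex[OF assms(1)] by (elim exE conjE)
  obtain ys where y: "walk_betw V E v ys w" "length ys = Suc (dist V E v w)"
    using dist_ex[OF assms(2)] by (elim exE conjE)
  have a: "walk_betw V E u (xs @ tl ys) w" "length (xs @ tl ys) = length xs + length ys - 1"
    using walk_betw_append[OF x(1) y(1)] by auto
  have "dist V E u w \<le> length (xs @ tl ys) - 1" by (rule dist_le[OF a(1)])
  also have "\<dots> = dist V E u v + dist V E v w" using a(2) x(2) y(2) by simp
  finally show ?thesis .
qed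

lemma walk_proj:
  assumes "walk V E xs" "\<forall>x\<in>V. f x \<in> V'"
    "\<forall>x y. x \<in> V \<longrightarrow> y \<in> V \<longrightarrow> E x y \<longrightarrow> f x = f y \<or> E' (f x) (f y)"
  shows "\<exists>ys. walk_betw V' E' (f (hd xs)) ys (f (last xs)) \<and> length ys \<le> length xs"
  using assms(1)
proof (induction xs rule: induct_list012)
  case 1 then show ?case by (simp add: walk_def)
next
  case (2 x)
  then show ?case using assms(2) by (intro exI[of _ "[f x]"]) (auto simp: walk_betw_def walk_def)
next
  case (3 x y zs)
  then have h: "x \<in> V" "E x y" "walk V E (y # zs)" by (auto simp: walk_Cons2)
  then have yV: "y \<in> V" by (auto simp: walk_def)
  obtain ys where ys: "walk_betw V' E' (f y) ys (f (last (y # zs)))" "length ys \<le> length (y # zs)"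
    using 3(2)[OF h(3)] by auto
  show ?case
  proof (cases "f x = f y")
    case True then show ?thesis using ys by (intro exI[of _ ys]) auto
  next
    case False
    then have "E' (f x) (f y)" using assms(3) h yV by blast
    moreover have "ys \<noteq> []" "hd ys = f y" "walk V' E' ys" using ys by (auto simp: walk_betw_def walk_def)
    ultimately have "walk V' E' (f x # ys)" using assms(2) h(1)
      by (metis list.collapse walk_Cons2)
    then show ?thesis using ys \<open>ys \<noteq> []\<close> by (intro exI[of _ "f x # ys"]) (auto simp: walk_betw_def)
  qed
qed

fun pz :: "'a list \<Rightarrow> 'b list \<Rightarrow> ('a \<times> 'b) list" where
  "pz (g # g2 # gs) (h # h2 # hs) = (g, h) # pz (g2 # gs) (h2 # hs)"
| "pz (g # g2 # gs) [h] = (g, h) # pz (g2 # gs) [h]"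
| "pz [g] (h # h2 # hs) = (g, h) # pz [g] (h2 # hs)"
| "pz [g] [h] = [(g, h)]"
| "pz _ _ = []"

lemma pz_props:
  assumes "\<forall>x. \<not> EG x x" "\<forall>x. \<not> EH x x"
  shows "walk VG EG gs \<Longrightarrow> walk VH EH hs \<Longrightarrow>
    walk (VG \<times> VH) (strong_prod_edge EG EH) (pz gs hs) \<and> hd (pz gs hs) = (hd gs, hd hs)
    \<and> last (pz gs hs) = (last gs, last hs) \<and> length (pz gs hs) = max (length gs) (length hs)"
proof (induction gs hs rule: pz.induct)
  case (1 g g2 gs h h2 hs)
  have gh: "g \<in> VG" "EG g g2" "walk VG EG (g2 # gs)" "h \<in> VH" "EH h h2" "walk VH EH (h2 # hs)"
    using "1.prems" by (auto simp: walk_Cons2)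
  have e: "strong_prod_edge EG EH (g, h) (g2, h2)"
    using gh assms by (auto simp: strong_prod_edge_def)
  obtain rest where eq: "pz (g2 # gs) (h2 # hs) = (g2, h2) # rest"
    by (cases gs; cases hs) auto
  have IH: "walk (VG \<times> VH) (strong_prod_edge EG EH) ((g2, h2) # rest)"
    "last ((g2, h2) # rest) = (last (g2 # gs), last (h2 # hs))"
    "length ((g2, h2) # rest) = max (length (g2 # gs)) (length (h2 # hs))"
    using "1.IH"[OF gh(3) gh(6)] unfolding eq by auto
  have w: "walk (VG \<times> VH) (strong_prod_edge EG EH) ((g, h) # (g2, h2) # rest)"
    using IH(1) e gh by (simp add: walk_Cons2)
  show ?case unfolding pz.simps(1) eq using w IH by simp
next
  case (2 g g2 gs h)
  have gh: "g \<in> VG" "EG g g2" "walk VG EG (g2 # gs)" "h \<in> VH" "walk VH EH [h]"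
    using "2.prems" by (auto simp: walk_Cons2 walk_def)
  have e: "strong_prod_edge EG EH (g, h) (g2, h)"
    using gh assms by (auto simp: strong_prod_edge_def)
  obtain rest where eq: "pz (g2 # gs) [h] = (g2, h) # rest"
    by (cases gs) auto
  have IH: "walk (VG \<times> VH) (strong_prod_edge EG EH) ((g2, h) # rest)"
    "last ((g2, h) # rest) = (last (g2 # gs), last [h])"
    "length ((g2, h) # rest) = max (length (g2 # gs)) (length [h])"
    using "2.IH"[OF gh(3) gh(5)] unfolding eq by auto
  have w: "walk (VG \<times> VH) (strong_prod_edge EG EH) ((g, h) # (g2, h) # rest)"
    using IH(1) e gh by (simp add: walk_Cons2)
  show ?case unfolding pz.simps(2) eq using w IH by simp
next
  case (3 g h h2 hs)
  have gh: "g \<in> VG" "walk VG EG [g]" "h \<in> VH" "EH h h2" "walk VH EH (h2 # hs)"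
    using "3.prems" by (auto simp: walk_Cons2 walk_def)
  have e: "strong_prod_edge EG EH (g, h) (g, h2)"
    using gh assms by (auto simp: strong_prod_edge_def)
  obtain rest where eq: "pz [g] (h2 # hs) = (g, h2) # rest"
    by (cases hs) auto
  have IH: "walk (VG \<times> VH) (strong_prod_edge EG EH) ((g, h2) # rest)"
    "last ((g, h2) # rest) = (last [g], last (h2 # hs))"
    "length ((g, h2) # rest) = max (length [g]) (length (h2 # hs))"
    using "3.IH"[OF gh(2) gh(5)] unfolding eq by auto
  have w: "walk (VG \<times> VH) (strong_prod_edge EG EH) ((g, h) # (g, h2) # rest)"
    using IH(1) e gh by (simp add: walk_Cons2)
  show ?case unfolding pz.simps(3) eq using w IH by simp
next
  case (4 g h) then show ?case by (auto simp: walk_def)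
qed (auto simp: walk_def)

lemma dist_self: "u \<in> V \<Longrightarrow> dist V E u u = 0"
  using dist_le[of V E u "[u]" u] by (auto simp: walk_betw_def walk_def)

lemma gp_core:
  assumes c: "connected_graph V E" and g: "gp_set V E S"
    and in1: "g1 \<in> S" and in2: "g2 \<in> S" and in3: "g3 \<in> S"
    and d12: "dist V E g1 g2 \<le> a" and d23: "dist V E g2 g3 \<le> b"
    and d13: "a + b \<le> dist V E g1 g3" and "0 < a" "0 < b"
  shows False
proof -
  have SV: "S \<subseteq> V" using g by (simp add: gp_set_def)
  have conn: "\<And>x y. x \<in> V \<Longrightarrow> y \<in> V \<Longrightarrow> \<exists>xs. walk_betw V E x xs y"
    using c by (auto simp: connected_graph_def)
  have V: "g1 \<in> V" "g2 \<in> V" "g3 \<in> V" using SV in1 in2 in3 by auto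
  have "dist V E g1 g3 \<le> dist V E g1 g2 + dist V E g2 g3"
    using dist_tri conn V by metis
  then have e: "dist V E g1 g2 = a" "dist V E g2 g3 = b" "dist V E g1 g3 = a + b"
    using d12 d23 d13 by auto
  have ne: "g1 \<noteq> g2" "g2 \<noteq> g3" "g1 \<noteq> g3"
    using e dist_self V \<open>0 < a\<close> \<open>0 < b\<close> by (metis add_is_0 not_gr0)+
  obtain W1 where W1: "walk_betw V E g1 W1 g2" "length W1 = Suc a"
    using dist_ex conn V e by metis
  obtain W2 where W2: "walk_betw V E g2 W2 g3" "length W2 = Suc b"
    using dist_ex conn V e by metis
  from walk_betw_append[OF W1(1) W2(1)]
  have W: "walk_betw V E g1 (W1 @ tl W2) g3" "length (W1 @ tl W2) = Suc (a + b)"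
    using W1(2) W2(2) by auto
  then have geo: "geodesic V E g1 (W1 @ tl W2) g3" using e by (simp add: geodesic_def)
  have W1ne: "W1 \<noteq> []" using W1 by auto
  have "g1 \<in> set W1" "g2 \<in> set W1" using W1 W1ne
    by (auto simp: walk_betw_def)
  then have "g1 \<in> set (W1 @ tl W2)" "g2 \<in> set (W1 @ tl W2)" by auto
  moreover have "g3 \<in> set (W1 @ tl W2)" using W W1ne
    by (metis Nil_is_append_conv last_in_set walk_betw_def)
  ultimately show False using g in1 in2 in3 ne geo unfolding gp_set_def by blast
qed


lemma proj_fst:
  assumes "walk_betw (VG \<times> VH) (strong_prod_edge EG EH) x ys y"
  shows "\<exists>zs. walk_betw VG EG (fst x) zs (fst y) \<and> length zs \<le> length ys"
proof -
  have w: "walk (VG \<times> VH) (strong_prod_edge EG EH) ys" "hd ys = x" "last ys = y"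
    using assms by (auto simp: walk_betw_def)
  have a: "\<forall>z\<in>VG \<times> VH. fst z \<in> VG" by auto
  have b: "\<forall>a b. a \<in> VG \<times> VH \<longrightarrow> b \<in> VG \<times> VH \<longrightarrow> strong_prod_edge EG EH a b \<longrightarrow> fst a = fst b \<or> EG (fst a) (fst b)"
    by (simp add: strong_prod_edge_def)
  show ?thesis using walk_proj[OF w(1) a b] w(2,3) by simp
qed

lemma proj_snd:
  assumes "walk_betw (VG \<times> VH) (strong_prod_edge EG EH) x ys y"
  shows "\<exists>zs. walk_betw VH EH (snd x) zs (snd y) \<and> length zs \<le> length ys"
proof -
  have w: "walk (VG \<times> VH) (strong_prod_edge EG EH) ys" "hd ys = x" "last ys = y"
    using assms by (auto simp: walk_betw_def)
  have a: "\<forall>z\<in>VG \<times> VH. snd z \<in> VH" by auto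
  have b: "\<forall>a b. a \<in> VG \<times> VH \<longrightarrow> b \<in> VG \<times> VH \<longrightarrow> strong_prod_edge EG EH a b \<longrightarrow> snd a = snd b \<or> EH (snd a) (snd b)"
    by (simp add: strong_prod_edge_def)
  show ?thesis using walk_proj[OF w(1) a b] w(2,3) by simp
qed

lemma key:
  assumes sG: "simple_graph VG EG" and cG: "connected_graph VG EG"
    and sH: "simple_graph VH EH" and cH: "connected_graph VH EH"
    and gS: "gp_set VG EG S" and gT: "gp_set VH EH T"
    and geo: "geodesic (VG \<times> VH) (strong_prod_edge EG EH) u xs v"
    and ij: "i < j" and jk: "j < k" and kl: "k < length xs"
    and pin: "xs ! i \<in> S \<times> T" and qin: "xs ! j \<in> S \<times> T" and rin: "xs ! k \<in> S \<times> T"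
  shows False
proof -
  let ?P = "VG \<times> VH" and ?E = "strong_prod_edge EG EH"
  define p where "p = xs ! i"
  define q where "q = xs ! j"
  define r where "r = xs ! k"
  define n where "n = length xs - 1"
  have w: "walk ?P ?E xs" "hd xs = u" "last xs = v" "length xs = Suc (dist ?P ?E u v)"
    using geo by (auto simp: geodesic_def walk_betw_def)
  have ne: "xs \<noteq> []" using kl by auto
  have u0: "xs ! 0 = u" using w ne by (simp add: hd_conv_nth)
  have vn: "xs ! n = v" using w ne by (simp add: last_conv_nth n_def)
  have nd: "n = dist ?P ?E u v" using w n_def by simp
  have kn: "k \<le> n" using kl n_def by simp
  have sw: "\<exists>ys. walk_betw ?P ?E (xs ! a) ys (xs ! b) \<and> length ys = Suc (b - a)"
    if "a \<le> b" "b \<le> n" for a b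
  proof -
    have "b < length xs" using that kl n_def by simp
    then show ?thesis using walk_subwalk[OF w(1) that(1)] by blast
  qed
  have dle: "dist ?P ?E (xs ! a) (xs ! b) \<le> b - a" if ab: "a \<le> b" "b \<le> n" for a b
  proof -
    obtain ys where "walk_betw ?P ?E (xs ! a) ys (xs ! b)" "length ys = Suc (b - a)"
      using sw[OF ab] by blast
    then show ?thesis using dist_le[of ?P ?E "xs ! a" ys "xs ! b"] by simp
  qed
  have swe: "\<exists>ys. walk_betw ?P ?E (xs ! a) ys (xs ! b)" if ab: "a \<le> b" "b \<le> n" for a b
    using sw[OF ab] by blast
  have e_up: "\<exists>ys. walk_betw ?P ?E u ys p" using swe[of 0 i] ij jk kn u0 p_def by simp
  have e_pv: "\<exists>ys. walk_betw ?P ?E p ys v" using swe[of i n] ij jk kn vn p_def by simp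
  have e_pr: "\<exists>ys. walk_betw ?P ?E p ys r" using swe[of i k] ij jk kn r_def p_def by simp
  have e_rv: "\<exists>ys. walk_betw ?P ?E r ys v" using swe[of k n] ij jk kn vn r_def by simp
  have dpq: "dist ?P ?E p q \<le> j - i" using dle[of i j] ij jk kn p_def q_def by simp
  have dqr: "dist ?P ?E q r \<le> k - j" using dle[of j k] jk kn q_def r_def by simp
  have dup: "dist ?P ?E u p \<le> i" using dle[of 0 i] ij jk kn p_def u0 by simp
  have drv: "dist ?P ?E r v \<le> n - k" using dle[of k n] kn r_def vn by simp
  have t1: "dist ?P ?E u v \<le> dist ?P ?E u p + dist ?P ?E p v"
    by (rule dist_tri[OF e_up e_pv])
  have t2: "dist ?P ?E p v \<le> dist ?P ?E p r + dist ?P ?E r v"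
    by (rule dist_tri[OF e_pr e_rv])
  have dpr: "k - i \<le> dist ?P ?E p r" using t1 t2 dup drv nd kn ij jk by linarith
  obtain g1 h1 where p12: "p = (g1, h1)" by (cases p)
  obtain g2 h2 where q12: "q = (g2, h2)" by (cases q)
  obtain g3 h3 where r12: "r = (g3, h3)" by (cases r)
  have SV: "S \<subseteq> VG" "T \<subseteq> VH" using gS gT by (auto simp: gp_set_def)
  have mem: "g1 \<in> S" "g2 \<in> S" "g3 \<in> S" "h1 \<in> T" "h2 \<in> T" "h3 \<in> T"
    using pin qin rin p12 q12 r12 p_def q_def r_def by auto
  have irr: "\<forall>x. \<not> EG x x" "\<forall>x. \<not> EH x x" using sG sH by (auto simp: simple_graph_def)
  have inV: "g1 \<in> VG" "g3 \<in> VG" "h1 \<in> VH" "h3 \<in> VH" using SV mem by auto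
  have eg: "\<exists>xs. walk_betw VG EG g1 xs g3" using cG inV unfolding connected_graph_def by blast
  have eh: "\<exists>xs. walk_betw VH EH h1 xs h3" using cH inV unfolding connected_graph_def by blast
  obtain gw where gw: "walk_betw VG EG g1 gw g3" "length gw = Suc (dist VG EG g1 g3)"
    using dist_ex[OF eg] by (elim exE conjE)
  obtain hw where hw: "walk_betw VH EH h1 hw h3" "length hw = Suc (dist VH EH h1 h3)"
    using dist_ex[OF eh] by (elim exE conjE)
  have wg: "walk VG EG gw" "hd gw = g1" "last gw = g3" using gw(1) by (auto simp: walk_betw_def)
  have wh: "walk VH EH hw" "hd hw = h1" "last hw = h3" using hw(1) by (auto simp: walk_betw_def)
  have pzp: "walk ?P ?E (pz gw hw) \<and> hd (pz gw hw) = (hd gw, hd hw)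
    \<and> last (pz gw hw) = (last gw, last hw) \<and> length (pz gw hw) = max (length gw) (length hw)"
    by (rule pz_props[OF irr wg(1) wh(1)])
  have pzw: "walk_betw ?P ?E p (pz gw hw) r" using pzp wg wh p12 r12 by (simp add: walk_betw_def)
  have dmax: "dist ?P ?E p r \<le> max (dist VG EG g1 g3) (dist VH EH h1 h3)"
    using dist_le[OF pzw] pzp gw(2) hw(2) by simp
  have projG: "dist VG EG (fst x) (fst y) \<le> dist ?P ?E x y" if ex: "\<exists>ys. walk_betw ?P ?E x ys y" for x y
  proof -
    obtain ys where ys: "walk_betw ?P ?E x ys y" "length ys = Suc (dist ?P ?E x y)"
      using dist_ex[OF ex] by (elim exE conjE)
    obtain zs where zs: "walk_betw VG EG (fst x) zs (fst y)" "length zs \<le> length ys"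
      using proj_fst[OF ys(1)] by (elim exE conjE)
    show ?thesis using dist_le[OF zs(1)] zs(2) ys(2) by simp
  qed
  have projH: "dist VH EH (snd x) (snd y) \<le> dist ?P ?E x y" if ex: "\<exists>ys. walk_betw ?P ?E x ys y" for x y
  proof -
    obtain ys where ys: "walk_betw ?P ?E x ys y" "length ys = Suc (dist ?P ?E x y)"
      using dist_ex[OF ex] by (elim exE conjE)
    obtain zs where zs: "walk_betw VH EH (snd x) zs (snd y)" "length zs \<le> length ys"
      using proj_snd[OF ys(1)] by (elim exE conjE)
    show ?thesis using dist_le[OF zs(1)] zs(2) ys(2) by simp
  qed
  have epq: "\<exists>ys. walk_betw ?P ?E p ys q" using swe[of i j] ij jk kn p_def q_def by simp
  have eqr: "\<exists>ys. walk_betw ?P ?E q ys r" using swe[of j k] ij jk kn q_def r_def by simp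
  have g12: "dist VG EG g1 g2 \<le> j - i" using projG[OF epq] dpq p12 q12 by simp
  have g23: "dist VG EG g2 g3 \<le> k - j" using projG[OF eqr] dqr q12 r12 by simp
  have h12: "dist VH EH h1 h2 \<le> j - i" using projH[OF epq] dpq p12 q12 by simp
  have h23: "dist VH EH h2 h3 \<le> k - j" using projH[OF eqr] dqr q12 r12 by simp
  have ab: "0 < j - i" "0 < k - j" "(j - i) + (k - j) = k - i" using ij jk by auto
  show False
  proof (cases "k - i \<le> dist VG EG g1 g3")
    case True
    show False
      by (rule gp_core[OF cG gS mem(1,2,3) g12 g23 _ ab(1,2)]) (use True ab(3) in simp)
  next
    case False
    then have "k - i \<le> dist VH EH h1 h3" using dpr dmax by linarith
    then show False
      by (intro gp_core[OF cH gT mem(4,5,6) h12 h23 _ ab(1,2)]) (use ab(3) in simp)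
  qed
qed

lemma gp_attained:
  assumes "finite V"
  shows "finite (card ` {S. gp_set V E S})" "\<exists>S. gp_set V E S \<and> card S = gp V E"
proof -
  have "card ` {S. gp_set V E S} \<subseteq> card ` Pow V" by (auto simp: gp_set_def)
  then show f: "finite (card ` {S. gp_set V E S})" using assms finite_subset by blast
  have "gp_set V E {}" by (simp add: gp_set_def)
  then have "card ` {S. gp_set V E S} \<noteq> {}" by blast
  from Max_in[OF f this] show "\<exists>S. gp_set V E S \<and> card S = gp V E"
    unfolding gp_def by auto
qed

theorem theorem4p2:
  fixes VG :: "'a set" and EG :: "'a \<Rightarrow> 'a \<Rightarrow> bool"
    and VH :: "'b set" and EH :: "'b \<Rightarrow> 'b \<Rightarrow> bool"
  assumes "simple_graph VG EG" and "connected_graph VG EG"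
    and "simple_graph VH EH" and "connected_graph VH EH"
  shows "gp (VG \<times> VH) (strong_prod_edge EG EH) \<ge> gp VG EG * gp VH EH"
proof -
  have fG: "finite VG" and fH: "finite VH" using assms by (auto simp: simple_graph_def)
  obtain S where S: "gp_set VG EG S" "card S = gp VG EG" using gp_attained(2)[OF fG] by blast
  obtain T where T: "gp_set VH EH T" "card T = gp VH EH" using gp_attained(2)[OF fH] by blast
  have gpST: "gp_set (VG \<times> VH) (strong_prod_edge EG EH) (S \<times> T)"
    unfolding gp_set_def
  proof (intro conjI ballI impI notI)
    show "S \<times> T \<subseteq> VG \<times> VH" using S T by (auto simp: gp_set_def)
  next
    fix x y z assume xyz: "x \<in> S \<times> T" "y \<in> S \<times> T" "z \<in> S \<times> T" "x \<noteq> y \<and> y \<noteq> z \<and> x \<noteq> z"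
    assume "\<exists>u v xs. geodesic (VG \<times> VH) (strong_prod_edge EG EH) u xs v \<and> x \<in> set xs \<and> y \<in> set xs \<and> z \<in> set xs"
    then obtain u v xs where g: "geodesic (VG \<times> VH) (strong_prod_edge EG EH) u xs v"
      "x \<in> set xs" "y \<in> set xs" "z \<in> set xs" by blast
    obtain a where a: "a < length xs" "xs ! a = x" using g(2) by (metis in_set_conv_nth)
    obtain b where b: "b < length xs" "xs ! b = y" using g(3) by (metis in_set_conv_nth)
    obtain c where c: "c < length xs" "xs ! c = z" using g(4) by (metis in_set_conv_nth)
    have H: "\<And>i j k. i < j \<Longrightarrow> j < k \<Longrightarrow> k < length xs \<Longrightarrow> i \<in> {a,b,c} \<Longrightarrow> j \<in> {a,b,c} \<Longrightarrow> k \<in> {a,b,c} \<Longrightarrow> False"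
    proof -
      fix i j k assume h: "i < j" "j < k" "k < length xs" "i \<in> {a,b,c}" "j \<in> {a,b,c}" "k \<in> {a,b,c}"
      have "\<And>m. m \<in> {a,b,c} \<Longrightarrow> xs ! m \<in> S \<times> T" using a b c xyz by auto
      then show False using key[OF assms S(1) T(1) g(1) h(1,2,3)] h by blast
    qed
    have "a \<noteq> b" "b \<noteq> c" "a \<noteq> c" using a b c xyz by auto
    then show False using H a b c
      by (metis insertCI linorder_neqE_nat)
  qed
  have "card (S \<times> T) = gp VG EG * gp VH EH" using S T by (simp add: card_cartesian_product)
  moreover have "card (S \<times> T) \<le> gp (VG \<times> VH) (strong_prod_edge EG EH)"
    unfolding gp_def using gpST gp_attained(1)[of "VG \<times> VH"] fG fH by (auto intro: Max_ge)
  ultimately show ?thesis by simp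
qed

end
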